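(* Let $\alpha,\beta>1$ with $\alpha+\beta\leqslant4$, let $V,W$ satisfy (H1)–(H2), and let $\rho=\left(\frac{\alpha+\beta}{4\hat c}\right)^{\frac{1}{\alpha+\beta-2}}$. Then there exist $b^*>0$ and $e=(e_0,e_0)\in C_0^\infty(\Omega_1)\times C_0^\infty(\Omega_2)$ such that for any $T,\lambda>0$ and any $b_1,b_2>0$ with $b_1+b_2\in(0,b^* )$, we have $\mathcal{J}^T_{\mathbf b,\lambda}(e)<0$ and $\|e\|_\lambda>\rho$.
   Context: (H1) $V,W\in C(\mathbb{R}^3,[0,\infty))$; $\Omega_1=\operatorname{int}V^{-1}(0)$, $\Omega_2=\operatorname{int}W^{-1}(0)$ have smooth boundaries, $\overline{\Omega}_1=V^{-1}(0)$, $\overline{\Omega}_2=W^{-1}(0)$, $\Omega_1\cap\Omega_2\neq\emptyset$. (H2) There is $c>0$ with $\mathcal M=\{x: V(x)W(x)\leqslant c^2\}$ of finite positive Lebesgue measure $|\mathcal M|$. $S$ is the best Sobolev constant with $\|u\|_6\leqslant S^{-1/2}\|\nabla u\|_2$ on $\mathcal{D}^{1,2}(\mathbb{R}^3)$. $\theta=\frac{\alpha+\beta-2}{16-2(\alpha+\beta)}$ and $\hat c=\left(\frac12\max\{S^{-1}|\mathcal M|^{2/3},\frac1c\}\right)^{\frac{1-\theta}{2\theta+1}}S^{-\frac{9\theta}{2\theta+1}}$. $E=E_V\times E_W$, $E_V=\{u\in\mathcal{D}^{1,2}(\mathbb{R}^3):\int Vu^2<\infty\}$, $E_W$ analogous;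 $E_\lambda$ is $E$ with norm $\|z\|_\lambda^2=\int(|\nabla u|^2+|\nabla v|^2+\lambda Vu^2+\lambda Wv^2)$. For $\mathbf b=(b_1,b_2)$, $T>0$: $\mathcal{J}^T_{\mathbf b,\lambda}(z)=\frac12\|z\|_\lambda^2+\frac14\xi(\|z\|_\lambda^2/T^2)(b_1\|\nabla u\|_2^4+b_2\|\nabla v\|_2^4)-\frac{1}{\alpha+\beta}\int|u^+|^\alpha|v^+|^\beta dx$, with $\xi\in C^\infty([0,\infty),[0,1])$, $\xi=1$ on $[0,1]$, $\xi=0$ on $[2,\infty)$, $\xi'\leqslant0$, $\|\xi'\|_\infty\leqslant2$. *)

theory Defs
  imports "HOL-Analysis.Analysis"
begin

type_synonym R3 = "real ^ 3"

definition partial_deriv :: "3 \<Rightarrow> (R3 \<Rightarrow> real) \<Rightarrow> R3 \<Rightarrow> real" where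
  "partial_deriv i f x = deriv (\<lambda>t. f (x + t *\<^sub>R axis i 1)) 0"

definition grad :: "(R3 \<Rightarrow> real) \<Rightarrow> R3 \<Rightarrow> R3" where
  "grad f x = (\<chi> i. partial_deriv i f x)"

fun Ck :: "nat \<Rightarrow> (R3 \<Rightarrow> real) \<Rightarrow> bool" where
  "Ck 0 f = continuous_on UNIV f"
| "Ck (Suc k) f = (continuous_on UNIV f \<and>
      (\<forall>i x. (\<lambda>t. f (x + t *\<^sub>R axis i 1)) differentiable (at 0)) \<and>
      (\<forall>i. Ck k (partial_deriv i f)))"

definition smooth :: "(R3 \<Rightarrow> real) \<Rightarrow> bool" where
  "smooth f \<longleftrightarrow> (\<forall>k. Ck k f)"

definition tsupport :: "(R3 \<Rightarrow> real) \<Rightarrow> R3 set" where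
  "tsupport f = closure {x. f x \<noteq> 0}"

text \<open>C_0^\<infinity>(\<Omega>): smooth functions (extended by zero) with compact support inside \<Omega>.\<close>
definition Cc_inf :: "R3 set \<Rightarrow> (R3 \<Rightarrow> real) set" where
  "Cc_inf \<Omega> = {f. smooth f \<and> compact (tsupport f) \<and> tsupport f \<subseteq> \<Omega>}"

definition smooth_boundary :: "R3 set \<Rightarrow> bool" where
  "smooth_boundary \<Omega> \<longleftrightarrow> (\<forall>p\<in>frontier \<Omega>. \<exists>U \<phi>. open U \<and> p \<in> U \<and> smooth \<phi> \<and>
      (\<forall>x\<in>U. grad \<phi> x \<noteq> 0) \<and> \<Omega> \<inter> U = {x\<in>U. \<phi> x < 0})"

definition weak_grad :: "(R3 \<Rightarrow> real) \<Rightarrow> (R3 \<Rightarrow> R3) \<Rightarrow> bool" where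
  "weak_grad u g \<longleftrightarrow> g \<in> borel_measurable lborel \<and>
     (\<forall>\<phi>\<in>Cc_inf UNIV. \<forall>i.
        integrable lborel (\<lambda>x. u x * partial_deriv i \<phi> x) \<and>
        integrable lborel (\<lambda>x. g x $ i * \<phi> x) \<and>
        (\<integral>x. u x * partial_deriv i \<phi> x \<partial>lborel) = - (\<integral>x. g x $ i * \<phi> x \<partial>lborel))"

definition D12 :: "(R3 \<Rightarrow> real) set" where
  "D12 = {u. u \<in> borel_measurable lborel \<and> integrable lborel (\<lambda>x. \<bar>u x\<bar> ^ 6) \<and>
              (\<exists>g. weak_grad u g \<and> integrable lborel (\<lambda>x. (norm (g x))\<^sup>2))}"

text \<open>Squared L^2 norm of the (weak) gradient; well defined by a.e. uniqueness.\<close>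
definition dirichlet :: "(R3 \<Rightarrow> real) \<Rightarrow> real" where
  "dirichlet u = (THE r. \<exists>g. weak_grad u g \<and> integrable lborel (\<lambda>x. (norm (g x))\<^sup>2) \<and>
                        r = (\<integral>x. (norm (g x))\<^sup>2 \<partial>lborel))"

definition L6norm :: "(R3 \<Rightarrow> real) \<Rightarrow> real" where
  "L6norm u = (\<integral>x. \<bar>u x\<bar> ^ 6 \<partial>lborel) powr (1/6)"

text \<open>Best constant S in  ||u||_6 \<le> S^(-1/2) ||\<nabla>u||_2  on D^{1,2}:
  the largest S with S ||u||_6^2 \<le> ||\<nabla>u||_2^2.\<close>
definition Sobolev_S :: real where
  "Sobolev_S = Inf {dirichlet u / (L6norm u)\<^sup>2 | u. u \<in> D12 \<and> L6norm u > 0}"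

definition cutoff_xi :: "(real \<Rightarrow> real) \<Rightarrow> bool" where
  "cutoff_xi \<xi> \<longleftrightarrow> (\<exists>D :: nat \<Rightarrow> real \<Rightarrow> real.
      (\<forall>x\<ge>0. D 0 x = \<xi> x) \<and>
      (\<forall>n. \<forall>x\<ge>0. (D n has_real_derivative D (Suc n) x) (at x within {0..})) \<and>
      (\<forall>x\<ge>0. D 1 x \<le> 0 \<and> \<bar>D 1 x\<bar> \<le> 2)) \<and>
    (\<forall>x\<ge>0. 0 \<le> \<xi> x \<and> \<xi> x \<le> 1) \<and>
    (\<forall>x\<in>{0..1}. \<xi> x = 1) \<and> (\<forall>x\<ge>2. \<xi> x = 0)"

definition gradL2sq :: "(R3 \<Rightarrow> real) \<Rightarrow> real" where
  "gradL2sq u = (\<integral>x. (norm (grad u x))\<^sup>2 \<partial>lborel)"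

definition norm_lam_sq :: "(R3 \<Rightarrow> real) \<Rightarrow> (R3 \<Rightarrow> real) \<Rightarrow> real \<Rightarrow> (R3 \<Rightarrow> real) \<times> (R3 \<Rightarrow> real) \<Rightarrow> real" where
  "norm_lam_sq V W lam z = (case z of (u, v) \<Rightarrow>
     (\<integral>x. (norm (grad u x))\<^sup>2 + (norm (grad v x))\<^sup>2 + lam * V x * (u x)\<^sup>2 + lam * W x * (v x)\<^sup>2 \<partial>lborel))"

definition norm_lam :: "(R3 \<Rightarrow> real) \<Rightarrow> (R3 \<Rightarrow> real) \<Rightarrow> real \<Rightarrow> (R3 \<Rightarrow> real) \<times> (R3 \<Rightarrow> real) \<Rightarrow> real" where
  "norm_lam V W lam z = sqrt (norm_lam_sq V W lam z)"

definition J_fun :: "(real \<Rightarrow> real) \<Rightarrow> (R3 \<Rightarrow> real) \<Rightarrow> (R3 \<Rightarrow> real) \<Rightarrow> real \<Rightarrow> real \<Rightarrow>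
    real \<Rightarrow> real \<Rightarrow> real \<Rightarrow> real \<Rightarrow> (R3 \<Rightarrow> real) \<times> (R3 \<Rightarrow> real) \<Rightarrow> real" where
  "J_fun \<xi> V W \<alpha> \<beta> T b1 b2 lam z = (case z of (u, v) \<Rightarrow>
     1/2 * norm_lam_sq V W lam z
     + 1/4 * \<xi> (norm_lam_sq V W lam z / T\<^sup>2) * (b1 * (gradL2sq u)\<^sup>2 + b2 * (gradL2sq v)\<^sup>2)
     - 1/(\<alpha>+\<beta>) * (\<integral>x. \<bar>max (u x) 0\<bar> powr \<alpha> * \<bar>max (v x) 0\<bar> powr \<beta> \<partial>lborel))"

definition theta :: "real \<Rightarrow> real \<Rightarrow> real" where
  "theta \<alpha> \<beta> = (\<alpha>+\<beta>-2) / (16 - 2*(\<alpha>+\<beta>))"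

definition c_hat :: "real \<Rightarrow> real \<Rightarrow> real \<Rightarrow> real \<Rightarrow> real" where
  "c_hat \<alpha> \<beta> c Mmeas =
     (let \<theta> = theta \<alpha> \<beta> in
      (1/2 * max (inverse Sobolev_S * Mmeas powr (2/3)) (1/c)) powr ((1-\<theta>)/(2*\<theta>+1))
      * Sobolev_S powr (-(9*\<theta>)/(2*\<theta>+1)))"

end

theory Submission
  imports Defs "HOL-Computational_Algebra.Polynomial"
begin

definition smooth1 :: "(real \<Rightarrow> real) \<Rightarrow> bool" where
  "smooth1 g \<longleftrightarrow> (\<exists>A. g \<in> A \<and> (\<forall>h\<in>A. \<exists>h'\<in>A. \<forall>x. (h has_real_derivative h' x) (at x)))"

lemma smooth1_deriv:
  assumes "smooth1 g"
  shows "\<exists>g'. smooth1 g' \<and> (\<forall>x. (g has_real_derivative g' x) (at x))"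
  using assms unfolding smooth1_def by blast

lemma smooth1_affine:
  assumes "smooth1 g"
  shows "smooth1 (\<lambda>s. c * g (a* s + b))"
proof -
  obtain A where A: "g \<in> A" "\<forall>h\<in>A. \<exists>h'\<in>A. \<forall>x. (h has_real_derivative h' x) (at x)"
    using assms unfolding smooth1_def by blast
  let ?B = "{(\<lambda>s. c' * h (a* s + b)) | h c'. h \<in> A}"
  have "\<forall>k\<in>?B. \<exists>k'\<in>?B. \<forall>x. (k has_real_derivative k' x) (at x)"
  proof
    fix k assume "k \<in> ?B"
    then obtain h c' where k: "k = (\<lambda>s. c' * h (a* s + b))" "h \<in> A" by blast
    then obtain h' where h': "h' \<in> A" "\<forall>x. (h has_real_derivative h' x) (at x)" using A by blast
    have "\<forall>x. (k has_real_derivative (c'*a) * h' (a * x+b)) (at x)"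
    proof
      fix x
      have "((\<lambda>s. a* s + b) has_real_derivative a) (at x)"
        by (auto intro!: derivative_eq_intros)
      from DERIV_chain2[OF h'(2)[rule_format, of "a * x+b"] this]
      have hc: "((\<lambda>s. h (a* s + b)) has_real_derivative h' (a * x+b) * a) (at x)" .
      show "(k has_real_derivative (c'*a) * h' (a * x+b)) (at x)"
        unfolding k using DERIV_cmult[OF hc, of c'] by (simp add: ac_simps)
    qed
    moreover have "(\<lambda>s. (c'*a) * h' (a * s+b)) \<in> ?B" using h' by blast
    ultimately show "\<exists>k'\<in>?B. \<forall>x. (k has_real_derivative k' x) (at x)"
      by (intro bexI[of _ "\<lambda>s. (c'*a) * h' (a * s+b)"]) auto
  qed
  moreover have "(\<lambda>s. c * g (a* s + b)) \<in> ?B" using A by blast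
  ultimately show ?thesis unfolding smooth1_def by (intro exI[of _ ?B]) blast
qed

inductive_set prodspan :: "(real \<Rightarrow> real) set \<Rightarrow> (real \<Rightarrow> real) set \<Rightarrow> (real \<Rightarrow> real) set"
  for A B where
  ps0: "(\<lambda>x. 0) \<in> prodspan A B"
| psS: "a \<in> A \<Longrightarrow> b \<in> B \<Longrightarrow> s \<in> prodspan A B \<Longrightarrow> (\<lambda>x. a x * b x + s x) \<in> prodspan A B"

lemma prodspan_closed:
  assumes A: "\<forall>h\<in>A. \<exists>h'\<in>A. \<forall>x. (h has_real_derivative h' x) (at x)"
    and B: "\<forall>h\<in>B. \<exists>h'\<in>B. \<forall>x. (h has_real_derivative h' x) (at x)"
    and "s \<in> prodspan A B"
  shows "\<exists>s'\<in>prodspan A B. \<forall>x. (s has_real_derivative s' x) (at x)"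
  using assms(3)
proof induction
  case ps0
  then show ?case by (intro bexI[of _ "\<lambda>x. 0"]) (auto intro: prodspan.intros)
next
  case (psS a b s)
  obtain a' where a': "a' \<in> A" "\<forall>x. (a has_real_derivative a' x) (at x)" using A psS by blast
  obtain b' where b': "b' \<in> B" "\<forall>x. (b has_real_derivative b' x) (at x)" using B psS by blast
  obtain s' where s': "s' \<in> prodspan A B" "\<forall>x. (s has_real_derivative s' x) (at x)" using psS by blast
  let ?d = "\<lambda>x. a' x * b x + (a x * b' x + s' x)"
  have "?d \<in> prodspan A B"
    using a' b' s' psS by (intro prodspan.intros) auto
  moreover have "\<forall>x. ((\<lambda>x. a x * b x + s x) has_real_derivative ?d x) (at x)"
  proof
    fix x
    have "((\<lambda>x. a x * b x + s x) has_real_derivative (a' x * b x + b' x * a x) + s' x) (at x)"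
      by (intro DERIV_add DERIV_mult a'(2)[rule_format] b'(2)[rule_format] s'(2)[rule_format])
    then show "((\<lambda>x. a x * b x + s x) has_real_derivative ?d x) (at x)" by (simp add: ac_simps)
  qed
  ultimately show ?case by (intro bexI[of _ ?d]) auto
qed

lemma smooth1_mult:
  assumes "smooth1 f" "smooth1 g"
  shows "smooth1 (\<lambda>x. f x * g x)"
proof -
  obtain A where A: "f \<in> A" "\<forall>h\<in>A. \<exists>h'\<in>A. \<forall>x. (h has_real_derivative h' x) (at x)"
    using assms unfolding smooth1_def by blast
  obtain B where B: "g \<in> B" "\<forall>h\<in>B. \<exists>h'\<in>B. \<forall>x. (h has_real_derivative h' x) (at x)"
    using assms unfolding smooth1_def by blast
  have "(\<lambda>x. f x * g x + (\<lambda>x. 0) x) \<in> prodspan A B"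
    using A B by (intro prodspan.intros) auto
  then have "(\<lambda>x. f x * g x) \<in> prodspan A B" by simp
  then show ?thesis unfolding smooth1_def
    using prodspan_closed[OF A(2) B(2)] by (intro exI[of _ "prodspan A B"]) blast
qed

definition f0 :: "real \<Rightarrow> real" where
  "f0 s = (if s > 0 then exp (- 1 / s) else 0)"

definition fp :: "real poly \<Rightarrow> real \<Rightarrow> real" where
  "fp p s = (if s > 0 then poly p (1/s) * exp (- 1 / s) else 0)"

lemma poly_exp_tendsto: "((\<lambda>z. poly q z * exp (- z)) \<longlongrightarrow> (0::real)) at_top"
proof -
  have "((\<lambda>z. \<Sum>i\<le>degree q. coeff q i * (z ^ i / exp z)) \<longlongrightarrow> (\<Sum>i\<le>degree q. coeff q i * 0)) at_top"
    by (intro tendsto_sum tendsto_mult tendsto_const tendsto_power_div_exp_0)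
  moreover have "(\<lambda>z. \<Sum>i\<le>degree q. coeff q i * (z ^ i / exp z)) = (\<lambda>z. poly q z * exp (- z))"
    by (auto simp: poly_altdef sum_divide_distrib exp_minus field_simps)
  ultimately show ?thesis by simp
qed

lemma fp_deriv: "(fp p has_real_derivative fp ([:0,0,1:] * (p - pderiv p)) x) (at x)"
proof -
  consider "x > 0" | "x < 0" | "x = 0" by linarith
  then show ?thesis
  proof cases
    case 1
    have d1: "((\<lambda>s. 1/s) has_real_derivative (- 1 / x^2)) (at x)"
      using 1 by (auto intro!: derivative_eq_intros simp: power2_eq_square field_simps)
    have d2: "((\<lambda>s. - 1/s) has_real_derivative (1 / x^2)) (at x)"
      using 1 by (auto intro!: derivative_eq_intros simp: power2_eq_square field_simps)
    have "((\<lambda>s. poly p (1/s) * exp (- 1 / s)) has_real_derivative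
        (poly (pderiv p) (1/x) * (- 1 / x^2)) * exp (- 1 / x) + (exp (- 1 / x) * (1 / x^2)) * poly p (1/x)) (at x)"
      by (intro DERIV_mult DERIV_chain2[OF poly_DERIV d1] DERIV_chain2[OF DERIV_exp d2])
    moreover have "(poly (pderiv p) (1/x) * (- 1 / x^2)) * exp (- 1 / x) + (exp (- 1 / x) * (1 / x^2)) * poly p (1/x)
       = fp ([:0,0,1:] * (p - pderiv p)) x"
    proof -
      have e: "1 / x^2 = (1/x) * (1/x)" by (simp add: power2_eq_square)
      show ?thesis using 1 unfolding e by (simp add: fp_def algebra_simps power2_eq_square)
    qed
    ultimately have "((\<lambda>s. poly p (1/s) * exp (- 1 / s)) has_real_derivative
        fp ([:0,0,1:] * (p - pderiv p)) x) (at x)" by simp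
    then show ?thesis
      by (rule has_field_derivative_transform_within_open[of _ _ _ "{0<..}"]) (use 1 in \<open>auto simp: fp_def\<close>)
  next
    case 2
    have "((\<lambda>s. 0) has_real_derivative fp ([:0,0,1:] * (p - pderiv p)) x) (at x)"
      using 2 by (simp add: fp_def)
    then show ?thesis
      by (rule has_field_derivative_transform_within_open[of _ _ _ "{..<0}"]) (use 2 in \<open>auto simp: fp_def\<close>)
  next
    case 3
    have L: "((\<lambda>y. fp p y / y) \<longlongrightarrow> 0) (at_left 0)"
    proof -
      have "eventually (\<lambda>y. 0 = fp p y / y) (at_left (0::real))"
        by (auto simp: eventually_at_left_field fp_def intro: exI[of _ "-1"])
      then show ?thesis by (rule Lim_transform_eventually[OF tendsto_const])
    qed
    have R: "((\<lambda>y. fp p y / y) \<longlongrightarrow> 0) (at_right 0)"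
      unfolding filterlim_at_right_to_top
    proof -
      have "((\<lambda>z. poly (pCons 0 p) z * exp (- z)) \<longlongrightarrow> 0) at_top" by (rule poly_exp_tendsto)
      moreover have "eventually (\<lambda>z. poly (pCons 0 p) z * exp (- z) = fp p (inverse z) / inverse z) at_top"
        using eventually_gt_at_top[of 0]
        by eventually_elim (simp add: fp_def inverse_eq_divide)
      ultimately show "((\<lambda>z. fp p (inverse z) / inverse z) \<longlongrightarrow> 0) at_top"
        using tendsto_cong by fastforce
    qed
    have "((\<lambda>y. (fp p y - fp p 0) / (y - 0)) \<longlongrightarrow> 0) (at 0)"
      using L R by (simp add: filterlim_at_split fp_def)
    then have "(fp p has_real_derivative 0) (at 0)"
      by (simp add: has_field_derivative_iff)
    then show ?thesis using 3 by (simp add: fp_def)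
  qed
qed

lemma smooth1_f0: "smooth1 f0"
proof -
  have e: "f0 = fp 1" by (auto simp: fun_eq_iff f0_def fp_def)
  have "\<forall>h\<in>range fp. \<exists>h'\<in>range fp. \<forall>x. (h has_real_derivative h' x) (at x)"
  proof
    fix h assume "h \<in> range fp"
    then obtain p where hp: "h = fp p" by auto
    show "\<exists>h'\<in>range fp. \<forall>x. (h has_real_derivative h' x) (at x)"
    proof (rule bexI[of _ "fp ([:0,0,1:] * (p - pderiv p))"])
      show "\<forall>x. (h has_real_derivative fp ([:0,0,1:] * (p - pderiv p)) x) (at x)"
        unfolding hp using fp_deriv by blast
    qed simp
  qed
  then show ?thesis unfolding smooth1_def e by (intro exI[of _ "range fp"]) auto
qed


lemma line_comp: "(x + t *\<^sub>R axis i 1) $ j = x $ j + (if j = i then t else 0)"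
  by (simp add: axis_def)

lemma shift_deriv:
  assumes "(F has_real_derivative D) (at a)"
  shows "((\<lambda>t. F (a + t)) has_real_derivative D) (at 0)"
proof -
  have "((\<lambda>t. a + t) has_real_derivative 1) (at 0)"
    by (auto intro!: derivative_eq_intros)
  moreover have "(F has_real_derivative D) (at (a + 0))" using assms by simp
  ultimately show ?thesis using DERIV_chain2[of F D "\<lambda>t. a + t" 0 1 UNIV] by simp
qed

definition Prod3 :: "(R3 \<Rightarrow> real) \<Rightarrow> bool" where
  "Prod3 f \<longleftrightarrow> (\<exists>F1 F2 F3. smooth1 F1 \<and> smooth1 F2 \<and> smooth1 F3 \<and>
      f = (\<lambda>x. F1 (x$1) * F2 (x$2) * F3 (x$3)))"

lemma smooth1_cont: "smooth1 F \<Longrightarrow> continuous_on UNIV F"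
  using smooth1_deriv DERIV_continuous_on by blast

lemma three_neq: "(1::3) \<noteq> 2" "(1::3) \<noteq> 3" "(2::3) \<noteq> 3" "(2::3) \<noteq> 1" "(3::3) \<noteq> 1" "(3::3) \<noteq> 2"
  by simp_all

lemma prod3_line_deriv:
  fixes x :: R3
  assumes d1: "\<forall>x. (F1 has_real_derivative G1 x) (at x)"
    and d2: "\<forall>x. (F2 has_real_derivative G2 x) (at x)"
    and d3: "\<forall>x. (F3 has_real_derivative G3 x) (at x)"
  shows "((\<lambda>t. F1 ((x + t *\<^sub>R axis i 1)$1) * F2 ((x + t *\<^sub>R axis i 1)$2) * F3 ((x + t *\<^sub>R axis i 1)$3))
     has_real_derivative
      (if i = 1 then G1 else F1) (x$1) * (if i = 2 then G2 else F2) (x$2) * (if i = 3 then G3 else F3) (x$3)) (at 0)"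
proof -
  consider "i = 1" | "i = 2" | "i = 3" using exhaust_3 by blast
  then show ?thesis
  proof cases
    case 1
    have "((\<lambda>t. F1 (x$1 + t) * F2 (x$2) * F3 (x$3)) has_real_derivative G1 (x$1) * F2 (x$2) * F3 (x$3)) (at 0)"
      using DERIV_cmult[OF shift_deriv[OF d1[rule_format, of "x$1"]], of "F2 (x$2) * F3 (x$3)"]
      by (simp add: ac_simps)
    then show ?thesis using 1 by (simp add: axis_def three_neq)
  next
    case 2
    have "((\<lambda>t. F1 (x$1) * F2 (x$2 + t) * F3 (x$3)) has_real_derivative F1 (x$1) * G2 (x$2) * F3 (x$3)) (at 0)"
      using DERIV_cmult[OF shift_deriv[OF d2[rule_format, of "x$2"]], of "F1 (x$1) * F3 (x$3)"]
      by (simp add: ac_simps)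
    then show ?thesis using 2 by (simp add: axis_def three_neq)
  next
    case 3
    have "((\<lambda>t. F1 (x$1) * F2 (x$2) * F3 (x$3 + t)) has_real_derivative F1 (x$1) * F2 (x$2) * G3 (x$3)) (at 0)"
      using DERIV_cmult[OF shift_deriv[OF d3[rule_format, of "x$3"]], of "F1 (x$1) * F2 (x$2)"]
      by (simp add: ac_simps)
    then show ?thesis using 3 by (simp add: axis_def three_neq)
  qed
qed

lemma Prod3_cont:
  assumes "Prod3 f" shows "continuous_on UNIV f"
proof -
  obtain F1 F2 F3 where F: "smooth1 F1" "smooth1 F2" "smooth1 F3"
    "f = (\<lambda>x. F1 (x$1) * F2 (x$2) * F3 (x$3))" using assms unfolding Prod3_def by blast
  have c: "continuous_on UNIV (\<lambda>x::R3. F (x $ j))" if "smooth1 F" for F j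
    by (rule continuous_on_compose2[OF smooth1_cont[OF that]]) (auto intro!: continuous_intros)
  show ?thesis unfolding F(4) by (intro continuous_on_mult c F)
qed

lemma Prod3_line:
  fixes x :: R3
  assumes "Prod3 f"
  shows "(\<lambda>t. f (x + t *\<^sub>R axis i 1)) differentiable (at 0) \<and> Prod3 (partial_deriv i f)"
proof -
  obtain F1 F2 F3 where F: "smooth1 F1" "smooth1 F2" "smooth1 F3"
    "f = (\<lambda>x. F1 (x$1) * F2 (x$2) * F3 (x$3))" using assms unfolding Prod3_def by blast
  obtain G1 where G1: "smooth1 G1" "\<forall>x. (F1 has_real_derivative G1 x) (at x)" using smooth1_deriv[OF F(1)] by blast
  obtain G2 where G2: "smooth1 G2" "\<forall>x. (F2 has_real_derivative G2 x) (at x)" using smooth1_deriv[OF F(2)] by blast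
  obtain G3 where G3: "smooth1 G3" "\<forall>x. (F3 has_real_derivative G3 x) (at x)" using smooth1_deriv[OF F(3)] by blast
  note D = prod3_line_deriv[OF G1(2) G2(2) G3(2)]
  have "(\<lambda>t. f (x + t *\<^sub>R axis i 1)) differentiable (at 0)"
    unfolding F(4) using D[of x i] real_differentiable_def by blast
  moreover have "partial_deriv i f = (\<lambda>x. (if i = 1 then G1 else F1) (x$1) * (if i = 2 then G2 else F2) (x$2) * (if i = 3 then G3 else F3) (x$3))"
    unfolding partial_deriv_def F(4) by (intro ext DERIV_imp_deriv D)
  moreover have "Prod3 (\<lambda>x. (if i = 1 then G1 else F1) (x$1) * (if i = 2 then G2 else F2) (x$2) * (if i = 3 then G3 else F3) (x$3))"
    unfolding Prod3_def using F G1 G2 G3 by (intro exI conjI refl) auto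
  ultimately show ?thesis by simp
qed

lemma Prod3_Ck: "Prod3 f \<Longrightarrow> Ck k f"
proof (induction k arbitrary: f)
  case 0
  then show ?case using Prod3_cont by simp
next
  case (Suc k)
  then show ?case using Prod3_cont Prod3_line by simp
qed

lemma Prod3_smooth: "Prod3 f \<Longrightarrow> smooth f"
  unfolding smooth_def using Prod3_Ck by blast


lemma partial_deriv_outside:
  assumes "x \<notin> tsupport f"
  shows "partial_deriv i f x = 0"
proof -
  have "open (- tsupport f)" unfolding tsupport_def by auto
  then obtain e where e: "e > 0" "ball x e \<subseteq> - tsupport f"
    using assms by (meson ComplI open_contains_ball)
  have z: "f (x + t *\<^sub>R axis i 1) = 0" if "t \<in> ball 0 e" for t
  proof -
    have "dist x (x + t *\<^sub>R axis i 1) < e" using that by (simp add: dist_norm)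
    then have "x + t *\<^sub>R axis i 1 \<in> ball x e" by (simp add: mem_ball)
    with e(2) have "x + t *\<^sub>R axis i 1 \<in> - tsupport f" by (rule subsetD)
    then have "x + t *\<^sub>R axis i 1 \<notin> tsupport f" by simp
    then have "x + t *\<^sub>R axis i 1 \<notin> {y. f y \<noteq> 0}" unfolding tsupport_def by (rule contra_subsetD[OF closure_subset])
    then show ?thesis by simp
  qed
  have "((\<lambda>t. 0) has_real_derivative 0) (at (0::real))" by simp
  then have "((\<lambda>t. f (x + t *\<^sub>R axis i 1)) has_real_derivative 0) (at 0)"
    by (rule has_field_derivative_transform_within_open[of _ _ _ "ball 0 e"]) (use e z in auto)
  then show ?thesis unfolding partial_deriv_def by (rule DERIV_imp_deriv)
qed

lemma partial_deriv_cmult: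
  assumes "(\<lambda>t. f (x + t *\<^sub>R axis i 1)) differentiable (at 0)"
  shows "partial_deriv i (\<lambda>x. c * f x) x = c * partial_deriv i f x"
proof -
  have "((\<lambda>t. f (x + t *\<^sub>R axis i 1)) has_real_derivative partial_deriv i f x) (at 0)"
    using assms unfolding partial_deriv_def by (simp add: DERIV_deriv_iff_real_differentiable)
  from DERIV_cmult[OF this, of c] show ?thesis
    unfolding partial_deriv_def[of i "\<lambda>x. c * f x"] by (rule DERIV_imp_deriv)
qed

lemma integrable_cont_supp:
  fixes g :: "R3 \<Rightarrow> real"
  assumes "continuous_on UNIV g" "compact K" "\<And>x. x \<notin> K \<Longrightarrow> g x = 0"
  shows "integrable lborel g"
proof -
  have "integrable lborel (\<lambda>x. indicator K x *\<^sub>R g x)"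
    by (rule borel_integrable_compact[OF assms(2)]) (rule continuous_on_subset[OF assms(1)], simp)
  moreover have "(\<lambda>x. indicator K x *\<^sub>R g x) = g"
    using assms(3) by (auto simp: indicator_def fun_eq_iff)
  ultimately show ?thesis by simp
qed

lemma integral_pos_cont:
  fixes f :: "R3 \<Rightarrow> real"
  assumes "continuous_on UNIV f" "\<And>x. 0 \<le> f x" "integrable lborel f" "0 < f x0"
  shows "0 < integral\<^sup>L lborel f"
proof -
  have "integral\<^sup>L lborel f \<ge> 0" using assms(2) by (simp add: integral_nonneg_AE)
  moreover have "integral\<^sup>L lborel f \<noteq> 0"
  proof
    assume "integral\<^sup>L lborel f = 0"
    then have "AE x in lborel. f x = 0"
      using integral_nonneg_eq_0_iff_AE[OF assms(3)] assms(2) by simp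
    then have "AE x in lebesgue. x \<in> {x. f x = (\<lambda>x. 0) x}"
      by (simp add: AE_completion)
    moreover have "closed {x. f x = (\<lambda>x. 0) x}"
      by (rule closed_Collect_eq[OF assms(1)]) simp
    ultimately have "x0 \<in> {x. f x = (\<lambda>x. 0) x}"
      using mem_closed_if_AE_lebesgue by blast
    then show False using assms(4) by simp
  qed
  ultimately show ?thesis by simp
qed

lemma exists_nonzero_partial:
  fixes p :: R3
  assumes "\<And>y. (\<lambda>t. f (y + t *\<^sub>R axis i 1)) differentiable (at 0)"
    and "f p \<noteq> f (p + d *\<^sub>R axis i 1)"
  shows "\<exists>x. partial_deriv i f x \<noteq> 0"
proof (rule ccontr)
  assume "\<not> (\<exists>x. partial_deriv i f x \<noteq> 0)"
  then have pz: "\<And>x. partial_deriv i f x = 0" by simp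
  let ?g = "\<lambda>s. f (p + s *\<^sub>R axis i 1)"
  have "\<forall>s. (?g has_real_derivative 0) (at s)"
  proof
    fix s
    have "((\<lambda>t. f ((p + s *\<^sub>R axis i 1) + t *\<^sub>R axis i 1)) has_real_derivative
        partial_deriv i f (p + s *\<^sub>R axis i 1)) (at 0)"
      using assms(1) unfolding partial_deriv_def by (simp add: DERIV_deriv_iff_real_differentiable)
    then have "((\<lambda>t. ?g (t + s)) has_real_derivative 0) (at 0)"
      using pz by (simp add: algebra_simps scaleR_add_left)
    then show "(?g has_real_derivative 0) (at s)"
      using DERIV_shift[of ?g 0 0 s] by simp
  qed
  then have "?g 0 = ?g d" by (rule DERIV_isconst_all)
  then show False using assms(2) by simp
qed


definition hb :: "real \<Rightarrow> real \<Rightarrow> real" where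
  "hb \<delta> s = f0 (\<delta> + s) * f0 (\<delta> - s)"

lemma smooth1_hb: "smooth1 (hb \<delta>)"
proof -
  have a: "smooth1 (\<lambda>s. 1 * f0 (1 * s + \<delta>))" by (rule smooth1_affine[OF smooth1_f0])
  have b: "smooth1 (\<lambda>s. 1 * f0 ((-1) * s + \<delta>))" by (rule smooth1_affine[OF smooth1_f0])
  have "smooth1 (\<lambda>s. (1 * f0 (1 * s + \<delta>)) * (1 * f0 ((-1) * s + \<delta>)))"
    by (rule smooth1_mult[OF a b])
  moreover have "(\<lambda>s. (1 * f0 (1 * s + \<delta>)) * (1 * f0 ((-1) * s + \<delta>))) = hb \<delta>"
    by (auto simp: hb_def fun_eq_iff add.commute)
  ultimately show ?thesis by simp
qed

lemma f0_nonneg: "f0 s \<ge> 0" by (simp add: f0_def)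

lemma hb_nonneg: "hb \<delta> s \<ge> 0" by (simp add: hb_def f0_nonneg)

lemma hb_pos: "\<bar>s\<bar> < \<delta> \<Longrightarrow> hb \<delta> s > 0" by (simp add: hb_def f0_def)

lemma hb_zero: "\<delta> \<le> \<bar>s\<bar> \<Longrightarrow> hb \<delta> s = 0" by (auto simp: hb_def f0_def)

definition phi :: "real \<Rightarrow> R3 \<Rightarrow> R3 \<Rightarrow> real" where
  "phi \<delta> a x = hb \<delta> (x$1 - a$1) * hb \<delta> (x$2 - a$2) * hb \<delta> (x$3 - a$3)"

lemma Prod3_phi: "Prod3 (\<lambda>x. t * phi \<delta> a x)"
proof -
  have "smooth1 (\<lambda>s. t * hb \<delta> (1 * s + (- a$1)))" by (rule smooth1_affine[OF smooth1_hb])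
  moreover have "smooth1 (\<lambda>s. 1 * hb \<delta> (1 * s + (- a$2)))" by (rule smooth1_affine[OF smooth1_hb])
  moreover have "smooth1 (\<lambda>s. 1 * hb \<delta> (1 * s + (- a$3)))" by (rule smooth1_affine[OF smooth1_hb])
  moreover have "(\<lambda>x. t * phi \<delta> a x) = (\<lambda>x. (\<lambda>s. t * hb \<delta> (1 * s + (- a$1))) (x$1) *
      (\<lambda>s. 1 * hb \<delta> (1 * s + (- a$2))) (x$2) * (\<lambda>s. 1 * hb \<delta> (1 * s + (- a$3))) (x$3))"
    by (simp add: phi_def fun_eq_iff ac_simps)
  ultimately show ?thesis unfolding Prod3_def by blast
qed

lemma Prod3_phi1: "Prod3 (phi \<delta> a)"
  using Prod3_phi[of 1 \<delta> a] by simp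

lemma phi_nonneg: "phi \<delta> a x \<ge> 0" by (simp add: phi_def hb_nonneg)

lemma phi_center: "\<delta> > 0 \<Longrightarrow> phi \<delta> a a > 0" by (simp add: phi_def hb_pos)

lemma phi_edge: "\<delta> > 0 \<Longrightarrow> phi \<delta> a (a + \<delta> *\<^sub>R axis 1 1) = 0"
  by (simp add: phi_def hb_zero axis_def)

lemma phi_supp:
  assumes "phi \<delta> a x \<noteq> 0"
  shows "x \<in> cbox (a - vec \<delta>) (a + vec \<delta>)"
proof -
  have c: "\<bar>x$j - a$j\<bar> < \<delta>" for j
  proof -
    have "j = 1 \<or> j = 2 \<or> j = 3" by (rule exhaust_3)
    then show ?thesis using assms hb_zero[of \<delta>] unfolding phi_def by (metis mult_zero_left mult_zero_right not_less)
  qed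
  show ?thesis unfolding mem_box_cart
  proof (intro allI conjI)
    fix i
    show "(a - vec \<delta>) $ i \<le> x $ i" using c[of i] by (simp add: abs_less_iff)
    show "x $ i \<le> (a + vec \<delta>) $ i" using c[of i] by (simp add: abs_less_iff)
  qed
qed

lemma tsupport_phi:
  "tsupport (\<lambda>x. t * phi \<delta> a x) \<subseteq> cbox (a - vec \<delta>) (a + vec \<delta>)"
  unfolding tsupport_def by (rule closure_minimal) (auto intro: phi_supp)

lemma cbox_in_ball:
  assumes "3 * \<delta> < e"
  shows "cbox (a - vec \<delta>) (a + vec \<delta>) \<subseteq> ball (a::R3) e"
proof
  fix x assume "x \<in> cbox (a - vec \<delta>) (a + vec \<delta>)"
  then have cb: "\<forall>i. a$i - \<delta> \<le> x$i \<and> x$i \<le> a$i + \<delta>" by (simp add: mem_box_cart)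
  have c: "\<bar>(x - a)$i\<bar> \<le> \<delta>" for i using cb[rule_format, of i] by (simp add: abs_le_iff)
  have "norm (x - a) \<le> (\<Sum>i\<in>UNIV. \<bar>(x - a)$i\<bar>)" by (rule norm_le_l1_cart)
  also have "\<dots> \<le> of_nat (card (UNIV::3 set)) * \<delta>" by (rule sum_bounded_above) (use c in auto)
  also have "\<dots> = 3 * \<delta>" by simp
  finally show "x \<in> ball a e" using assms by (simp add: dist_norm norm_minus_commute)
qed


lemma Ck1_phi: "Ck (Suc 0) (phi \<delta> a)"
  using Prod3_Ck[OF Prod3_phi1] by blast

lemma compact_tsupport_phi: "compact (tsupport (\<lambda>x. t * phi \<delta> a x))"
proof -
  have "compact (cbox (a - vec \<delta>) (a + vec \<delta>) \<inter> tsupport (\<lambda>x. t * phi \<delta> a x))"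
    by (rule compact_Int_closed) (auto simp: tsupport_def)
  moreover have "cbox (a - vec \<delta>) (a + vec \<delta>) \<inter> tsupport (\<lambda>x. t * phi \<delta> a x) = tsupport (\<lambda>x. t * phi \<delta> a x)"
    using tsupport_phi by blast
  ultimately show ?thesis by simp
qed

lemma grad_pos:
  assumes "\<delta> > 0"
  shows "0 < gradL2sq (phi \<delta> a)"
proof -
  let ?f = "phi \<delta> a"
  let ?g = "\<lambda>x. (norm (grad ?f x))\<^sup>2"
  have pc: "continuous_on UNIV (partial_deriv i ?f)" for i using Ck1_phi by simp
  have cg: "continuous_on UNIV (grad ?f)"
    unfolding grad_def[abs_def] by (intro continuous_on_vec_lambda pc)
  have cont: "continuous_on UNIV ?g" by (intro continuous_intros cg)
  have ts: "tsupport ?f = tsupport (\<lambda>x. 1 * phi \<delta> a x)" by simp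
  have zero: "?g x = 0" if "x \<notin> tsupport ?f" for x
  proof -
    have "grad ?f x = 0" unfolding grad_def using partial_deriv_outside[OF that]
      by (simp add: vec_eq_iff)
    then show ?thesis by simp
  qed
  have int: "integrable lborel ?g"
    by (rule integrable_cont_supp[OF cont _ zero]) (use compact_tsupport_phi[of 1 \<delta> a] in simp)
  have "\<exists>x. partial_deriv 1 ?f x \<noteq> 0"
    by (rule exists_nonzero_partial[of ?f 1 a \<delta>])
      (use Prod3_line[OF Prod3_phi1] phi_center[of \<delta> a, OF assms] phi_edge[of \<delta> a, OF assms] in auto)
  then obtain x1 where x1: "partial_deriv 1 ?f x1 \<noteq> 0" by blast
  then have "grad ?f x1 \<noteq> 0" unfolding grad_def by (metis vec_lambda_beta zero_index)
  then have "0 < ?g x1" by simp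
  then show ?thesis unfolding gradL2sq_def
    by (intro integral_pos_cont[OF cont _ int]) auto
qed

lemma powr_pos:
  assumes "\<delta> > 0" "p > 0"
  shows "0 < (\<integral>x. phi \<delta> a x powr p \<partial>lborel)"
proof -
  let ?f = "phi \<delta> a"
  let ?g = "\<lambda>x. ?f x powr p"
  have cf: "continuous_on UNIV ?f" using Ck1_phi by simp
  have cont: "continuous_on UNIV ?g"
    by (rule continuous_on_powr') (use cf phi_nonneg assms in auto)
  have zero: "?g x = 0" if "x \<notin> tsupport ?f" for x
  proof -
    have "x \<notin> {y. ?f y \<noteq> 0}" using that unfolding tsupport_def by (rule contra_subsetD[OF closure_subset])
    then have "?f x = 0" by simp
    then show ?thesis by simp
  qed
  have int: "integrable lborel ?g"
    by (rule integrable_cont_supp[OF cont _ zero]) (use compact_tsupport_phi[of 1 \<delta> a] in simp)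
  have "0 < ?g a" using phi_center[of \<delta> a, OF assms(1)] by simp
  then show ?thesis
    by (intro integral_pos_cont[OF cont _ int]) auto
qed

lemma grad_scale:
  "grad (\<lambda>x. t * phi \<delta> a x) x = t *\<^sub>R grad (phi \<delta> a) x"
proof -
  have "partial_deriv i (\<lambda>x. t * phi \<delta> a x) x = t * partial_deriv i (phi \<delta> a) x" for i
    by (rule partial_deriv_cmult) (use Prod3_line[OF Prod3_phi1] in blast)
  then show ?thesis unfolding grad_def by (simp add: vec_eq_iff)
qed


theorem lemma2p4:
  fixes V W :: "R3 \<Rightarrow> real" and \<alpha> \<beta> c :: real and \<xi> :: "real \<Rightarrow> real"
  assumes "\<alpha> > 1" "\<beta> > 1" "\<alpha> + \<beta> \<le> 4"
    and "continuous_on UNIV V" "\<forall>x. V x \<ge> 0"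
    and "continuous_on UNIV W" "\<forall>x. W x \<ge> 0"
    and "smooth_boundary (interior (V -` {0}))"
    and "smooth_boundary (interior (W -` {0}))"
    and "closure (interior (V -` {0})) = V -` {0}"
    and "closure (interior (W -` {0})) = W -` {0}"
    and "interior (V -` {0}) \<inter> interior (W -` {0}) \<noteq> {}"
    and "c > 0"
    and "0 < emeasure lborel {x. V x * W x \<le> c\<^sup>2}"
    and "emeasure lborel {x. V x * W x \<le> c\<^sup>2} < \<infinity>"
    and "cutoff_xi \<xi>"
  shows "\<exists>bstar > 0. \<exists>e0.
           e0 \<in> Cc_inf (interior (V -` {0})) \<and> e0 \<in> Cc_inf (interior (W -` {0})) \<and>
           (\<forall>T lam b1 b2. T > 0 \<longrightarrow> lam > 0 \<longrightarrow> b1 > 0 \<longrightarrow> b2 > 0 \<longrightarrow> b1 + b2 < bstar \<longrightarrow>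
              J_fun \<xi> V W \<alpha> \<beta> T b1 b2 lam (e0, e0) < 0 \<and>
              norm_lam V W lam (e0, e0) >
                ((\<alpha>+\<beta>) / (4 * c_hat \<alpha> \<beta> c (measure lborel {x. V x * W x \<le> c\<^sup>2})))
                  powr (1 / (\<alpha>+\<beta>-2)))"
proof -
  define p where "p = \<alpha> + \<beta>"
  have p2: "p > 2" and p0: "p > 0" using assms(1,2) by (auto simp: p_def)
  define R where "R = ((\<alpha>+\<beta>) / (4 * c_hat \<alpha> \<beta> c (measure lborel {x. V x * W x \<le> c\<^sup>2}))) powr (1 / (\<alpha>+\<beta>-2))"
  define \<Omega> where "\<Omega> = interior (V -` {0}) \<inter> interior (W -` {0})"
  have "open \<Omega>" by (simp add: \<Omega>_def open_Int)
  obtain a where "a \<in> \<Omega>" using assms(12) unfolding \<Omega>_def by blast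
  obtain \<epsilon> where \<epsilon>: "\<epsilon> > 0" "ball a \<epsilon> \<subseteq> \<Omega>" using \<open>open \<Omega>\<close> \<open>a \<in> \<Omega>\<close> openE by blast
  define \<delta> where "\<delta> = \<epsilon> / 4"
  have \<delta>: "\<delta> > 0" "3 * \<delta> < \<epsilon>" using \<epsilon> by (auto simp: \<delta>_def)
  have K\<Omega>: "cbox (a - vec \<delta>) (a + vec \<delta>) \<subseteq> \<Omega>" using cbox_in_ball[OF \<delta>(2)] \<epsilon>(2) by blast
  define G0 where "G0 = gradL2sq (phi \<delta> a)"
  have G0: "G0 > 0" unfolding G0_def by (rule grad_pos[OF \<delta>(1)])
  define I0 where "I0 = (\<integral>x. phi \<delta> a x powr p \<partial>lborel)"
  have I0: "I0 > 0" unfolding I0_def by (rule powr_pos[OF \<delta>(1) p0])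
  define K0 where "K0 = 2 * p * G0 / I0"
  have K0: "K0 > 0" using G0 I0 p0 by (simp add: K0_def)
  define s1 where "s1 = K0 powr (1 / (p - 2))"
  define t where "t = max (max 1 s1) (R\<^sup>2 + 1 / G0 + 1)"
  have t1: "t \<ge> 1" and ts1: "t \<ge> s1" and tR: "t \<ge> R\<^sup>2 + 1 / G0 + 1" by (auto simp: t_def)
  have tpos: "t > 0" using t1 by simp
  define A where "A = t\<^sup>2 * G0"
  have Apos: "A > 0" using tpos G0 by (simp add: A_def)
  have hA: "2 * A > R\<^sup>2"
  proof -
    have "t \<ge> 1 / G0" using tR by (smt (verit) zero_le_power2)
    then have tG: "t * G0 \<ge> 1" using G0 by (simp add: field_simps)
    have "A = t * (t * G0)" by (simp add: A_def power2_eq_square)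
    also have "\<dots> \<ge> t * 1" using tG tpos by (intro mult_left_mono) auto
    finally have "A \<ge> t" by simp
    then show ?thesis using tR G0 by (smt (verit) divide_pos_pos zero_le_power2)
  qed
  have hI: "t powr p * I0 / p \<ge> 2 * A"
  proof -
    have "s1 powr (p - 2) = K0"
      unfolding s1_def using p2 K0 by (simp add: powr_powr powr_one)
    moreover have "s1 powr (p - 2) \<le> t powr (p - 2)"
      using ts1 p2 by (intro powr_mono2) (auto simp: s1_def)
    ultimately have tK: "K0 \<le> t powr (p - 2)" by simp
    have "t powr p = t powr 2 * t powr (p - 2)"
      by (subst powr_add[symmetric]) simp
    also have "\<dots> = t\<^sup>2 * t powr (p - 2)" using tpos by simp
    finally have tp: "t powr p = t\<^sup>2 * t powr (p - 2)" .
    have "2 * A = t\<^sup>2 * K0 * I0 / p" using I0 p0 by (simp add: A_def K0_def field_simps)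
    also have "\<dots> \<le> t\<^sup>2 * t powr (p - 2) * I0 / p"
      using tK I0 p0 by (intro divide_right_mono mult_right_mono mult_left_mono) auto
    finally show ?thesis using tp by simp
  qed
  define e0 where "e0 = (\<lambda>x. t * phi \<delta> a x)"
  have sm: "smooth e0" unfolding e0_def by (rule Prod3_smooth[OF Prod3_phi])
  have tsE: "tsupport e0 \<subseteq> \<Omega>" unfolding e0_def using tsupport_phi K\<Omega> by blast
  have cE: "compact (tsupport e0)" unfolding e0_def by (rule compact_tsupport_phi)
  have memV: "e0 \<in> Cc_inf (interior (V -` {0}))"
    unfolding Cc_inf_def using sm cE tsE by (auto simp: \<Omega>_def)
  have memW: "e0 \<in> Cc_inf (interior (W -` {0}))"
    unfolding Cc_inf_def using sm cE tsE by (auto simp: \<Omega>_def)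
  have inO: "x \<in> \<Omega>" if "e0 x \<noteq> 0" for x
  proof -
    have "x \<in> {y. e0 y \<noteq> 0}" using that by simp
    then have "x \<in> tsupport e0" unfolding tsupport_def using closure_subset by (rule subsetD[rotated])
    then show ?thesis using tsE by (rule subsetD[rotated])
  qed
  have V0: "V x * (e0 x)\<^sup>2 = 0" for x
  proof (cases "e0 x = 0")
    case False
    then have "x \<in> interior (V -` {0})" using inO[OF False] by (simp add: \<Omega>_def)
    then have "V x = 0" using interior_subset by blast
    then show ?thesis by simp
  qed simp
  have W0: "W x * (e0 x)\<^sup>2 = 0" for x
  proof (cases "e0 x = 0")
    case False
    then have "x \<in> interior (W -` {0})" using inO[OF False] by (simp add: \<Omega>_def)
    then have "W x = 0" using interior_subset by blast
    then show ?thesis by simp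
  qed simp
  have gE: "(norm (grad e0 x))\<^sup>2 = t\<^sup>2 * (norm (grad (phi \<delta> a) x))\<^sup>2" for x
    unfolding e0_def grad_scale using tpos by (simp add: power_mult_distrib)
  have N: "norm_lam_sq V W lam (e0, e0) = 2 * A" for lam
  proof -
    have "(\<lambda>x. (norm (grad e0 x))\<^sup>2 + (norm (grad e0 x))\<^sup>2 + lam * V x * (e0 x)\<^sup>2 + lam * W x * (e0 x)\<^sup>2)
        = (\<lambda>x. (2 * t\<^sup>2) * (norm (grad (phi \<delta> a) x))\<^sup>2)"
    proof
      fix x
      have h1: "lam * V x * (e0 x)\<^sup>2 = 0" by (metis V0 mult.assoc mult_zero_right)
      have h2: "lam * W x * (e0 x)\<^sup>2 = 0" by (metis W0 mult.assoc mult_zero_right)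
      show "(norm (grad e0 x))\<^sup>2 + (norm (grad e0 x))\<^sup>2 + lam * V x * (e0 x)\<^sup>2 + lam * W x * (e0 x)\<^sup>2
        = (2 * t\<^sup>2) * (norm (grad (phi \<delta> a) x))\<^sup>2" unfolding h1 h2 gE[of x] by simp
    qed
    then show ?thesis unfolding norm_lam_sq_def
      by (simp add: A_def G0_def gradL2sq_def)
  qed
  have Gr: "gradL2sq e0 = A"
    unfolding gradL2sq_def gE by (simp add: A_def G0_def gradL2sq_def)
  have Iq: "(\<integral>x. \<bar>max (e0 x) 0\<bar> powr \<alpha> * \<bar>max (e0 x) 0\<bar> powr \<beta> \<partial>lborel) = t powr p * I0"
  proof -
    have "(\<lambda>x. \<bar>max (e0 x) 0\<bar> powr \<alpha> * \<bar>max (e0 x) 0\<bar> powr \<beta>) = (\<lambda>x. t powr p * phi \<delta> a x powr p)"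
    proof
      fix x
      have nn: "e0 x \<ge> 0" using tpos phi_nonneg[of \<delta> a x] by (simp add: e0_def)
      then have "\<bar>max (e0 x) 0\<bar> powr \<alpha> * \<bar>max (e0 x) 0\<bar> powr \<beta> = e0 x powr (\<alpha> + \<beta>)"
        by (simp add: powr_add)
      also have "\<dots> = t powr p * phi \<delta> a x powr p" by (simp add: e0_def p_def powr_mult)
      finally show "\<bar>max (e0 x) 0\<bar> powr \<alpha> * \<bar>max (e0 x) 0\<bar> powr \<beta> = t powr p * phi \<delta> a x powr p" .
    qed
    then show ?thesis by (simp add: I0_def)
  qed
  have xi: "0 \<le> \<xi> y \<and> \<xi> y \<le> 1" if "y \<ge> 0" for y
    using assms(16) that unfolding cutoff_xi_def by blast
  show ?thesis
  proof (intro exI[of _ "1 / A"] conjI exI[of _ e0] memV memW allI impI)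
    show "0 < 1 / A" using Apos by simp
  next
    fix T lam b1 b2 :: real
    assume T: "T > 0" and b1: "b1 > 0" and b2: "b2 > 0" and bs: "b1 + b2 < 1 / A"
    define xv where "xv = \<xi> (2 * A / T\<^sup>2)"
    have xv: "0 \<le> xv" "xv \<le> 1" using xi[of "2 * A / T\<^sup>2"] Apos by (auto simp: xv_def)
    have J: "J_fun \<xi> V W \<alpha> \<beta> T b1 b2 lam (e0, e0) = A + 1/4 * xv * ((b1 + b2) * A\<^sup>2) - 1 / p * (t powr p * I0)"
      unfolding J_fun_def using N[of lam] Gr Iq by (simp add: xv_def p_def algebra_simps)
    have bA: "(b1 + b2) * A < 1" using bs Apos by (simp add: field_simps)
    have "(b1 + b2) * A\<^sup>2 = ((b1 + b2) * A) * A" by (simp add: power2_eq_square)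
    also have "\<dots> < 1 * A" using bA Apos by (intro mult_strict_right_mono) auto
    finally have bA2: "(b1 + b2) * A\<^sup>2 < A" by simp
    have "xv * ((b1 + b2) * A\<^sup>2) \<le> 1 * ((b1 + b2) * A\<^sup>2)"
      using xv b1 b2 by (intro mult_right_mono) auto
    then have x2: "xv * ((b1 + b2) * A\<^sup>2) < A" using bA2 by simp
    have "1 / p * (t powr p * I0) = t powr p * I0 / p" by simp
    then have "1 / p * (t powr p * I0) \<ge> 2 * A" using hI by simp
    then show "J_fun \<xi> V W \<alpha> \<beta> T b1 b2 lam (e0, e0) < 0"
      unfolding J using x2 Apos by linarith
  next
    fix T lam b1 b2 :: real
    have "R \<le> \<bar>R\<bar>" by simp
    also have "\<bar>R\<bar> = sqrt (R\<^sup>2)" by simp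
    also have "\<dots> < sqrt (2 * A)" using real_less_rsqrt[of "\<bar>R\<bar>" "2 * A"] hA by simp
    also have "\<dots> = norm_lam V W lam (e0, e0)" by (simp add: norm_lam_def N)
    finally show "norm_lam V W lam (e0, e0) > ((\<alpha>+\<beta>) / (4 * c_hat \<alpha> \<beta> c (measure lborel {x. V x * W x \<le> c\<^sup>2}))) powr (1 / (\<alpha>+\<beta>-2))"
      unfolding R_def .
  qed
qed

end
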